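(* Let $n$ and $x$ be positive integers with $x\le n$, and let $\mathcal M=\{M_1,\dots,M_s\}$ be a collection of perfect matchings of the complete graph $K_{2n}$. If $$s<\frac{x!}{2^x}\cdot\frac{\binom{2n}{x}\binom{2n-x}{x}}{\binom{n}{x}^2},$$ then there exists a perfect matching $M$ of $K_{2n}$ such that $|M\cap M_i|\le x-1$ for every $i\in\{1,\dots,s\}$.
   Context: A perfect matching of $K_{2n}$ is a set of $n$ pairwise vertex-disjoint edges covering all $2n$ vertices. A perfect matching $M$ "agrees with $M_i$ in at most $x-1$ edges" means $|M\cap M_i|\le x-1$. *)

theory Defs
  imports Complex_Main
begin

definition K_edges :: "nat \<Rightarrow> nat set set" where
  "K_edges n = {e. e \<subseteq> {0..<2*n} \<and> card e = 2}"

definition perfect_matching :: "nat \<Rightarrow> nat set set \<Rightarrow> bool" where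
  "perfect_matching n M \<longleftrightarrow>
     M \<subseteq> K_edges n \<and>
     (\<forall>e\<in>M. \<forall>f\<in>M. e \<noteq> f \<longrightarrow> e \<inter> f = {}) \<and>
     \<Union>M = {0..<2*n}"

end

theory Submission imports Defs begin

definition pm :: "nat set \<Rightarrow> nat set set set" where
  "pm V = {M. (\<forall>e\<in>M. e \<subseteq> V \<and> card e = 2) \<and> (\<forall>e\<in>M. \<forall>f\<in>M. e \<noteq> f \<longrightarrow> e \<inter> f = {}) \<and> \<Union>M = V}"

fun pmc :: "nat \<Rightarrow> nat" where
  "pmc 0 = 1" | "pmc (Suc m) = (2*m+1) * pmc m"

lemma pm_D: assumes "M \<in> pm V"
  shows "\<forall>e\<in>M. e \<subseteq> V \<and> card e = 2" "\<forall>e\<in>M. \<forall>f\<in>M. e \<noteq> f \<longrightarrow> e \<inter> f = {}" "\<Union>M = V"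
  using assms unfolding pm_def mem_Collect_eq by auto

lemma pm_I: assumes "\<forall>e\<in>M. e \<subseteq> V \<and> card e = 2" "\<forall>e\<in>M. \<forall>f\<in>M. e \<noteq> f \<longrightarrow> e \<inter> f = {}" "\<Union>M = V"
  shows "M \<in> pm V"
  using assms unfolding pm_def mem_Collect_eq by auto

lemma l1: "\<forall>e\<in>M. \<forall>f\<in>M. e \<noteq> f \<longrightarrow> e \<inter> f = {} \<Longrightarrow> e \<in> M - F \<Longrightarrow> F \<subseteq> M \<Longrightarrow> f \<in> F \<Longrightarrow> e \<inter> f = {}"
proof -
  assume B: "\<forall>e\<in>M. \<forall>f\<in>M. e \<noteq> f \<longrightarrow> e \<inter> f = {}" and e: "e \<in> M - F" and F: "F \<subseteq> M" and f: "f \<in> F"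
  have "e \<noteq> f" using e f by auto
  moreover have "e \<in> M" "f \<in> M" using e f F by auto
  ultimately show ?thesis using B by simp
qed

lemma pm_remove:
  assumes "M \<in> pm V" "F \<subseteq> M"
  shows "M - F \<in> pm (V - \<Union>F)"
proof -
  note A = pm_D(1)[OF assms(1)] and B = pm_D(2)[OF assms(1)] and C = pm_D(3)[OF assms(1)]
  have D: "e \<inter> \<Union>F = {}" if "e \<in> M - F" for e
  proof -
    have "e \<inter> f = {}" if "f \<in> F" for f by (rule l1[OF B \<open>e \<in> M - F\<close> assms(2) that])
    thus ?thesis by blast
  qed
  show ?thesis
  proof (rule pm_I)
    show "\<forall>e\<in>M - F. e \<subseteq> V - \<Union>F \<and> card e = 2" using A D by blast
    show "\<forall>e\<in>M - F. \<forall>f\<in>M - F. e \<noteq> f \<longrightarrow> e \<inter> f = {}" using B by blast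
    show "\<Union>(M - F) = V - \<Union>F"
    proof
      show "\<Union>(M - F) \<subseteq> V - \<Union>F" using A D by blast
      show "V - \<Union>F \<subseteq> \<Union>(M - F)" using C assms(2) by blast
    qed
  qed
qed

lemma pm_finite: "finite V \<Longrightarrow> finite (pm V)"
  by (rule finite_subset[of _ "Pow (Pow V)"]) (auto simp: pm_def)

lemma pm_elem_finite: "finite V \<Longrightarrow> M \<in> pm V \<Longrightarrow> finite M"
  by (rule finite_subset[of _ "Pow V"]) (auto simp: pm_def)

lemma pm_empty: "pm {} = {{}}"
proof -
  have "M = {}" if "M \<in> pm {}" for M
  proof (rule ccontr)
    assume "M \<noteq> {}" then obtain e where "e \<in> M" by blast
    with that have "e = {}" "card e = 2" unfolding pm_def by auto
    thus False by simp
  qed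
  thus ?thesis unfolding pm_def by auto
qed

lemma card_Union_pm:
  assumes "finite V" "M \<in> pm V" "F \<subseteq> M"
  shows "card (\<Union>F) = 2 * card F"
proof -
  note A = pm_D(1)[OF assms(2)] and B = pm_D(2)[OF assms(2)]
  have c2: "card e = 2" if "e \<in> F" for e using A assms(3) that by blast
  have pw: "pairwise disjnt F"
    unfolding pairwise_def disjnt_def
  proof (intro ballI impI)
    fix e f assume "e \<in> F" "f \<in> F" "e \<noteq> f"
    then have "e \<in> M" "f \<in> M" using assms(3) by auto
    thus "e \<inter> f = {}" using B \<open>e \<noteq> f\<close> by simp
  qed
  have "card (\<Union>F) = sum card F"
  proof (rule card_Union_disjoint[OF pw])
    fix e assume "e \<in> F" then have "card e = 2" by (rule c2)
    thus "finite e" by (metis card.infinite zero_neq_numeral)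
  qed
  also have "\<dots> = sum (\<lambda>_. 2) F"
    by (rule sum.cong) (simp_all add: c2)
  finally show ?thesis by simp
qed

lemma pm_step:
  assumes "v \<in> V"
  shows "pm V = (\<Union>w\<in>V-{v}. insert {v,w} ` pm (V - {v,w}))"
proof
  show "pm V \<subseteq> (\<Union>w\<in>V-{v}. insert {v,w} ` pm (V - {v,w}))"
  proof
    fix M assume M: "M \<in> pm V"
    then obtain e where e: "e \<in> M" "v \<in> e" using assms unfolding pm_def by blast
    then have "card e = 2" "e \<subseteq> V" using M unfolding pm_def by auto
    then obtain w where w: "e = {v,w}" "w \<noteq> v" using e(2)
      by (metis card_2_iff insert_commute insert_iff singletonD)
    have "M - {e} \<in> pm (V - \<Union>{e})" using pm_remove[OF M] e by blast
    moreover have "M = insert e (M - {e})" using e by blast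
    ultimately have "M \<in> insert e ` pm (V - \<Union>{e})"
      by (metis image_eqI)
    then have "M \<in> insert {v,w} ` pm (V - {v,w})"
      using w by simp
    moreover have "w \<in> V - {v}" using w \<open>e \<subseteq> V\<close> by auto
    ultimately show "M \<in> (\<Union>w\<in>V-{v}. insert {v,w} ` pm (V - {v,w}))"
      by blast
  qed
next
  show "(\<Union>w\<in>V-{v}. insert {v,w} ` pm (V - {v,w})) \<subseteq> pm V"
  proof
    fix M assume "M \<in> (\<Union>w\<in>V-{v}. insert {v,w} ` pm (V - {v,w}))"
    then obtain w N where w: "w \<in> V" "w \<noteq> v" and N: "N \<in> pm (V - {v,w})"
      and MN: "M = insert {v,w} N" by blast
    show "M \<in> pm V"
      unfolding MN using N w assms unfolding pm_def by auto
  qed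
qed

lemma card_pm: "finite V \<Longrightarrow> card V = 2*m \<Longrightarrow> card (pm V) = pmc m"
proof (induction m arbitrary: V)
  case 0
  then show ?case by (simp add: pm_empty)
next
  case (Suc m)
  then obtain v where v: "v \<in> V" by fastforce
  have "card (pm V) = card (\<Union>w\<in>V-{v}. insert {v,w} ` pm (V - {v,w}))"
    using pm_step[OF v] by simp
  also have "\<dots> = (\<Sum>w\<in>V-{v}. card (insert {v,w} ` pm (V - {v,w})))"
  proof (rule card_UN_disjoint)
    show "finite (V - {v})" using Suc by simp
    show "\<forall>i\<in>V - {v}. finite (insert {v, i} ` pm (V - {v, i}))"
      using Suc pm_finite by simp
    show "\<forall>i\<in>V - {v}. \<forall>j\<in>V - {v}. i \<noteq> j \<longrightarrow>
      insert {v, i} ` pm (V - {v, i}) \<inter> insert {v, j} ` pm (V - {v, j}) = {}"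
    proof (intro ballI impI)
      fix i j assume ij: "i \<in> V - {v}" "j \<in> V - {v}" "i \<noteq> j"
      show "insert {v, i} ` pm (V - {v, i}) \<inter> insert {v, j} ` pm (V - {v, j}) = {}"
      proof (rule ccontr)
        assume "\<not> ?thesis"
        then obtain N N' where N: "N \<in> pm (V - {v,i})" "N' \<in> pm (V - {v,j})"
          "insert {v,i} N = insert {v,j} N'" by blast
        then have "{v,i} \<in> N'" using ij by (metis doubleton_eq_iff insertE insertI1)
        then have "v \<in> \<Union>N'" by blast
        thus False using N(2) unfolding pm_def by auto
      qed
    qed
  qed
  also have "\<dots> = (\<Sum>w\<in>V-{v}. pmc m)"
  proof (rule sum.cong)
    fix w assume w: "w \<in> V - {v}"
    have "card (insert {v,w} ` pm (V - {v,w})) = card (pm (V - {v,w}))"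
    proof (rule card_image, rule inj_onI)
      fix A B assume AB: "A \<in> pm (V - {v,w})" "B \<in> pm (V - {v,w})" "insert {v,w} A = insert {v,w} B"
      have "{v,w} \<notin> A" "{v,w} \<notin> B" using AB(1,2) unfolding pm_def by auto
      thus "A = B" using AB(3) by (metis insert_ident)
    qed
    also have "\<dots> = pmc m"
      apply (rule Suc.IH) using Suc.prems w v by (auto simp: card_Diff_subset)
    finally show "card (insert {v,w} ` pm (V - {v,w})) = pmc m" .
  qed simp
  also have "\<dots> = (2*m+1) * pmc m" using Suc.prems v by simp
  finally show ?case by simp
qed

lemma aux: "(c::real) \<noteq> 0 \<Longrightarrow> k * (a / b) = c * k * a / (c * b)"
  by simp

lemma pmc_real: "real (pmc m) = fact (2*m) / (2^m * fact m)"
proof (induction m)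
  case (Suc m)
  have f1: "fact (2*Suc m) = (real (2*m+2) * (2*m+1)) * fact (2*m)"
    by (simp add: algebra_simps)
  have f2: "(2::real)^Suc m * fact (Suc m) = real (2*m+2) * (2^m * fact m)"
    by (simp add: algebra_simps)
  have "real (pmc (Suc m)) = real (2*m+1) * real (pmc m)"
    by (simp add: algebra_simps)
  also have "\<dots> = real (2*m+1) * (fact (2*m) / (2^m * fact m))"
    using Suc by simp
  also have "\<dots> = (real (2*m+2) * (2*m+1)) * fact (2*m) / (real (2*m+2) * (2^m * fact m))"
    using aux[of "real (2*m+2)" "real (2*m+1)" "fact (2*m)" "2^m * fact m"] by simp
  also have "\<dots> = fact (2*Suc m) / (2^Suc m * fact (Suc m))"
    by (simp only: f1 f2)
  finally show ?case .
qed simp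

lemma ratio_eq:
  assumes "x \<le> n"
  shows "fact x / 2 ^ x *
           (real ((2*n) choose x) * real ((2*n - x) choose x) / real (n choose x) ^ 2)
         = real (pmc n) / (real (n choose x) * real (pmc (n-x)))"
proof -
  have c1: "real ((2*n) choose x) = fact (2*n) / (fact x * fact (2*n-x))"
    using assms by (simp add: binomial_fact)
  have c2: "real ((2*n-x) choose x) = fact (2*n-x) / (fact x * fact (2*(n-x)))"
  proof -
    have e: "2*n-x-x = 2*(n-x)" using assms by simp
    have l: "x \<le> 2*n-x" using assms by simp
    show ?thesis using binomial_fact[OF l] e by simp
  qed
  have c3: "real (n choose x) = fact n / (fact x * fact (n-x))"
    using assms by (simp add: binomial_fact)
  have p: "(2::real)^n = 2^x * 2^(n-x)" using assms by (simp add: power_add[symmetric])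
  have nz: "fact (2*n-x) \<noteq> (0::real)" "fact x \<noteq> (0::real)" "fact (n-x) \<noteq> (0::real)"
    "fact n \<noteq> (0::real)" "fact (2*(n-x)) \<noteq> (0::real)" "fact (2*n) \<noteq> (0::real)" by auto
  show ?thesis unfolding c1 c2 c3 pmc_real p using nz
    by (simp add: field_simps power2_eq_square)
qed

lemma pm_iff: "perfect_matching n M \<longleftrightarrow> M \<in> pm {0..<2*n}"
  unfolding perfect_matching_def pm_def K_edges_def mem_Collect_eq subset_eq by simp

theorem theorem2:
  fixes n x s :: nat and Ms :: "nat \<Rightarrow> nat set set"
  assumes "0 < x" and "x \<le> n"
    and "\<forall>i\<in>{1..s}. perfect_matching n (Ms i)"
    and "real s < fact x / 2 ^ x *
           (real ((2*n) choose x) * real ((2*n - x) choose x) / real (n choose x) ^ 2)"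
  shows "\<exists>M. perfect_matching n M \<and> (\<forall>i\<in>{1..s}. card (M \<inter> Ms i) \<le> x - 1)"
proof -
  define V where "V = {0..<2*n}"
  have fV: "finite V" and cV: "card V = 2*n" unfolding V_def by auto
  have Msi: "Ms i \<in> pm V" if "i \<in> {1..s}" for i using assms(3) that pm_iff V_def by blast
  define ext where "ext F = {M \<in> pm V. F \<subseteq> M}" for F
  define bad where "bad i = {M \<in> pm V. x \<le> card (M \<inter> Ms i)}" for i
  have cardMs: "card (Ms i) = n" if "i \<in> {1..s}" for i
  proof -
    have "card (\<Union>(Ms i)) = 2 * card (Ms i)" using card_Union_pm[OF fV Msi[OF that]] by simp
    moreover have "\<Union>(Ms i) = V" using Msi[OF that] unfolding pm_def by auto
    ultimately show ?thesis using cV by simp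
  qed
  have ext_le: "card (ext F) \<le> pmc (n-x)" if i: "i \<in> {1..s}" and F: "F \<subseteq> Ms i" "card F = x" for i F
  proof -
    have cU: "card (\<Union>F) = 2*x" using card_Union_pm[OF fV Msi[OF i] F(1)] F(2) by simp
    have UV: "\<Union>F \<subseteq> V" using Msi[OF i] F(1) unfolding pm_def by auto
    have cD: "card (V - \<Union>F) = 2*(n-x)" using cU UV cV fV
      by (simp add: card_Diff_subset finite_subset diff_mult_distrib2)
    have "ext F \<subseteq> (\<lambda>N. N \<union> F) ` pm (V - \<Union>F)"
    proof
      fix M assume "M \<in> ext F"
      then have M: "M \<in> pm V" "F \<subseteq> M" unfolding ext_def by auto
      have "M - F \<in> pm (V - \<Union>F)" by (rule pm_remove[OF M])
      moreover have "M = (M - F) \<union> F" using M by blast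
      ultimately show "M \<in> (\<lambda>N. N \<union> F) ` pm (V - \<Union>F)" by (metis image_eqI)
    qed
    then have "card (ext F) \<le> card ((\<lambda>N. N \<union> F) ` pm (V - \<Union>F))"
      by (intro card_mono finite_imageI pm_finite) (use fV in auto)
    also have "\<dots> \<le> card (pm (V - \<Union>F))" by (rule card_image_le) (use fV pm_finite in auto)
    also have "\<dots> = pmc (n-x)" using card_pm[OF _ cD] fV by simp
    finally show ?thesis .
  qed
  have bad_le: "card (bad i) \<le> (n choose x) * pmc (n-x)" if i: "i \<in> {1..s}" for i
  proof -
    let ?Fs = "{F. F \<subseteq> Ms i \<and> card F = x}"
    have fMs: "finite (Ms i)" using pm_elem_finite[OF fV Msi[OF i]] .
    have "bad i \<subseteq> (\<Union>F\<in>?Fs. ext F)"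
    proof
      fix M assume "M \<in> bad i"
      then have M: "M \<in> pm V" "x \<le> card (M \<inter> Ms i)" unfolding bad_def by auto
      then obtain F where F: "F \<subseteq> M \<inter> Ms i" "card F = x" by (metis obtain_subset_with_card_n)
      then show "M \<in> (\<Union>F\<in>?Fs. ext F)" using M unfolding ext_def by blast
    qed
    moreover have "finite (\<Union>F\<in>?Fs. ext F)"
      by (rule finite_subset[of _ "pm V"]) (use fV pm_finite in \<open>auto simp: ext_def\<close>)
    ultimately have "card (bad i) \<le> card (\<Union>F\<in>?Fs. ext F)"
      by (intro card_mono)
    also have "\<dots> \<le> (\<Sum>F\<in>?Fs. card (ext F))"
      by (rule card_UN_le) (use fMs in simp)
    also have "\<dots> \<le> (\<Sum>F\<in>?Fs. pmc (n-x))"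
      by (rule sum_mono) (use ext_le i in blast)
    also have "\<dots> = card ?Fs * pmc (n-x)" by simp
    also have "card ?Fs = n choose x" using n_subsets[OF fMs, of x] cardMs[OF i] by simp
    finally show ?thesis .
  qed
  have "card (\<Union>i\<in>{1..s}. bad i) \<le> (\<Sum>i\<in>{1..s}. card (bad i))" by (rule card_UN_le) simp
  also have "\<dots> \<le> (\<Sum>i\<in>{1..s}. (n choose x) * pmc (n-x))" by (rule sum_mono) (rule bad_le)
  also have "\<dots> = s * ((n choose x) * pmc (n-x))" by simp
  finally have b1: "card (\<Union>i\<in>{1..s}. bad i) \<le> s * ((n choose x) * pmc (n-x))" .
  have pos: "real (n choose x) * real (pmc (n-x)) > 0"
  proof -
    have "pmc m > 0" for m by (induction m) auto
    thus ?thesis using assms(2) by simp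
  qed
  have "real s < real (pmc n) / (real (n choose x) * real (pmc (n-x)))"
    using assms(4) ratio_eq[OF assms(2)] by simp
  then have "real s * (real (n choose x) * real (pmc (n-x))) < real (pmc n)"
    using pos by (simp add: pos_less_divide_eq)
  then have "s * ((n choose x) * pmc (n-x)) < pmc n" by (metis of_nat_less_iff of_nat_mult)
  with b1 have "card (\<Union>i\<in>{1..s}. bad i) < card (pm V)" using card_pm[OF fV cV] by simp
  then obtain M where M: "M \<in> pm V" "M \<notin> (\<Union>i\<in>{1..s}. bad i)"
  proof -
    have "(\<Union>i\<in>{1..s}. bad i) \<subseteq> pm V" unfolding bad_def by auto
    then have "pm V \<noteq> (\<Union>i\<in>{1..s}. bad i)" using \<open>card (\<Union>i\<in>{1..s}. bad i) < card (pm V)\<close> by auto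
    then have "\<not> pm V \<subseteq> (\<Union>i\<in>{1..s}. bad i)" using \<open>(\<Union>i\<in>{1..s}. bad i) \<subseteq> pm V\<close> by blast
    thus ?thesis using that by blast
  qed
  show ?thesis
  proof (intro exI conjI ballI)
    show "perfect_matching n M" using M(1) pm_iff V_def by simp
    fix i assume "i \<in> {1..s}"
    then have "\<not> x \<le> card (M \<inter> Ms i)" using M unfolding bad_def by blast
    thus "card (M \<inter> Ms i) \<le> x - 1" by simp
  qed
qed

end
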